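(* Let $S$ be a finite semigroup in which every element has a square root (i.e. for every $x\in S$ there is $y\in S$ with $y^2=x$). Then every $x\in S$ has a square root in $\langle x\rangle=\{x,x^2,x^3,\dots\}$. *)

theory Defs
  imports Main
begin

text \<open>Positive powers in a semigroup (no unit needed):
  spow x n = x^(n+1).\<close>
primrec spow :: "'a::semigroup_mult \<Rightarrow> nat \<Rightarrow> 'a" where
  "spow x 0 = x"
| "spow x (Suc n) = spow x n * x"

definition cyclic_subsemigroup :: "'a::semigroup_mult \<Rightarrow> 'a set" where
  "cyclic_subsemigroup x = range (spow x)"

end

theory Submission
  imports Defs
begin

lemma spow_mult: "spow x m * spow x n = spow (x::'a::semigroup_mult) (m+n+1)"
  by (induction n) (simp_all add: mult.assoc[symmetric])

theorem theorem4p8: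
  assumes "\<forall>x::'a::{semigroup_mult, finite}. \<exists>y::'a. y * y = x"
  shows "\<forall>x::'a. \<exists>y\<in>cyclic_subsemigroup x. y * y = x"
proof
  fix x :: 'a
  define sq where "sq = (\<lambda>y::'a. y * y)"
  have "surj sq" using assms unfolding sq_def by (metis surjI)
  hence inj: "inj sq" by (rule finite_UNIV_surj_inj[OF finite_UNIV])
  define C where "C = cyclic_subsemigroup x"
  have sub: "sq ` C \<subseteq> C"
  proof
    fix z assume "z \<in> sq ` C"
    then obtain n where "z = spow x n * spow x n"
      by (auto simp: C_def cyclic_subsemigroup_def sq_def)
    hence "z = spow x (n+n+1)" by (simp only: spow_mult)
    thus "z \<in> C" unfolding C_def cyclic_subsemigroup_def by blast
  qed
  have "sq ` C = C"
    using endo_inj_surj[OF finite sub inj_on_subset[OF inj subset_UNIV]] .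
  moreover have "x \<in> C" unfolding C_def cyclic_subsemigroup_def
    by (metis rangeI spow.simps(1))
  ultimately have "x \<in> sq ` C" by simp
  then obtain y where "y \<in> C" "x = sq y" by blast
  thus "\<exists>y\<in>cyclic_subsemigroup x. y * y = x"
    unfolding C_def sq_def by auto
qed

end
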